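(* Let $d\ge1$, let $g$ be a (nondegenerate) Gaussian probability density on $\mathbb{R}^d$, and let $V:\mathbb{R}^d\to(0,\infty)$ be of class $C^{1,1}_{\mathrm{loc}}$, bounded from below by a positive constant, with $\int_{\mathbb{R}^d}V^{-d}=1$. Assume there exists $A>0$ such that \[ \frac{|\nabla V(x)|}{V(x)}\le\frac{A}{1+|x|}\qquad\text{for all }x\in\mathbb{R}^d. \] Then the monotone transport $T$ from $V^{-d}$ to $g$ satisfies \[ |T(x)|\le C\sqrt{1+\log(1+|x|)}\qquad\text{for all }x\in\mathbb{R}^d, \] for some constant $C>0$ depending only on the data. *)

theory Defs
  imports "HOL-Analysis.Analysis" "HOL-Probability.Probability"
begin

definition pos_def_matrix :: "real^'n^'n \<Rightarrow> bool" where
  "pos_def_matrix S \<longleftrightarrow> transpose S = S \<and> (\<forall>v. v \<noteq> 0 \<longrightarrow> v \<bullet> (S *v v) > 0)"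

definition gaussian_density :: "real^'n \<Rightarrow> real^'n^'n \<Rightarrow> real^'n \<Rightarrow> real" where
  "gaussian_density m S x =
     exp (- ((x - m) \<bullet> (matrix_inv S *v (x - m))) / 2)
       / sqrt ((2 * pi) ^ CARD('n) * det S)"

definition monotone_transport ::
    "(real^'n) measure \<Rightarrow> (real^'n) measure \<Rightarrow> (real^'n \<Rightarrow> real^'n) \<Rightarrow> bool" where
  "monotone_transport \<mu> \<nu> T \<longleftrightarrow>
     (\<exists>\<phi>. convex_on UNIV \<phi> \<and> (\<forall>x. (\<phi> has_derivative (\<lambda>h. T x \<bullet> h)) (at x)))
     \<and> distr \<mu> lborel T = \<nu>"

end

theory Submission
  imports Defs
begin


lemma convex_tangent:
  fixes \<phi> :: "'a::real_normed_vector \<Rightarrow> real"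
  assumes cvx: "convex_on UNIV \<phi>" and d: "(\<phi> has_derivative D) (at x)"
  shows "\<phi> y - \<phi> x \<ge> D (y - x)"
proof -
  define g where "g t = \<phi> (x + t *\<^sub>R (y - x))" for t :: real
  have cg: "convex_on UNIV g"
    unfolding convex_on_def g_def
  proof (intro conjI convex_UNIV ballI allI impI)
    fix s t u v :: real assume uv: "0 \<le> u" "0 \<le> v" "u + v = 1"
    have "x + (u *\<^sub>R s + v *\<^sub>R t) *\<^sub>R (y - x) = u *\<^sub>R (x + s *\<^sub>R (y - x)) + v *\<^sub>R (x + t *\<^sub>R (y - x))"
      using uv by (simp add: algebra_simps flip: scaleR_add_left)
    then show "\<phi> (x + (u *\<^sub>R s + v *\<^sub>R t) *\<^sub>R (y - x)) \<le> u * \<phi> (x + s *\<^sub>R (y - x)) + v * \<phi> (x + t *\<^sub>R (y - x))"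
      using cvx uv unfolding convex_on_def by auto
  qed
  have ld: "linear D" using d has_derivative_linear by blast
  have "((\<lambda>t. x + t *\<^sub>R (y - x)) has_derivative (\<lambda>t. t *\<^sub>R (y - x))) (at 0)"
    by (auto intro!: derivative_eq_intros)
  moreover have "(\<phi> has_derivative D) (at (x + 0 *\<^sub>R (y - x)))" using d by simp
  ultimately have "(g has_derivative (\<lambda>t. D (t *\<^sub>R (y - x)))) (at 0)"
    unfolding g_def using has_derivative_compose by (metis (no_types) has_derivative_compose)
  then have "(g has_derivative (\<lambda>t. t * D (y - x))) (at 0)"
    using linear_scale[OF ld] by (simp add: linear_cmul[OF ld])
  then have "(g has_field_derivative D (y - x)) (at 0 within UNIV)"
    unfolding has_field_derivative_def
    by (metis (no_types, lifting) ext mult.commute)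
  from convex_on_imp_above_tangent[OF cg _ _ _ this, of 1]
  have "g 1 - g 0 \<ge> D (y - x) * (1 - 0)" by simp
  then show ?thesis by (simp add: g_def)
qed

lemma grad_mono:
  fixes \<phi> :: "'a::real_inner \<Rightarrow> real"
  assumes cvx: "convex_on UNIV \<phi>" and d: "\<forall>x. (\<phi> has_derivative (\<lambda>h. T x \<bullet> h)) (at x)"
  shows "(T y - T x) \<bullet> (y - x) \<ge> 0"
proof -
  have "\<phi> y - \<phi> x \<ge> T x \<bullet> (y - x)" using convex_tangent[OF cvx d[rule_format, of x]] by simp
  moreover have "\<phi> x - \<phi> y \<ge> T y \<bullet> (x - y)" using convex_tangent[OF cvx d[rule_format, of y]] by simp
  ultimately show ?thesis by (simp add: inner_diff_left inner_diff_right inner_commute)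
qed



lemma line_deriv:
  fixes \<phi> :: "'a::real_normed_vector \<Rightarrow> real"
  assumes d: "(\<phi> has_derivative (\<lambda>h. D h)) (at (x + t *\<^sub>R v))"
  shows "((\<lambda>s. \<phi> (x + s *\<^sub>R v)) has_real_derivative D v) (at t)"
proof -
  have ld: "linear D" using d has_derivative_linear by blast
  have "((\<lambda>s. x + s *\<^sub>R v) has_derivative (\<lambda>s. s *\<^sub>R v)) (at t)"
    by (auto intro!: derivative_eq_intros)
  from has_derivative_compose[OF this d]
  have "((\<lambda>s. \<phi> (x + s *\<^sub>R v)) has_derivative (\<lambda>s. D (s *\<^sub>R v))) (at t)" .
  then have "((\<lambda>s. \<phi> (x + s *\<^sub>R v)) has_derivative (\<lambda>s. s * D v)) (at t)"
    by (simp add: linear_cmul[OF ld])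
  then show ?thesis unfolding has_field_derivative_def
    by (metis (no_types, lifting) ext mult.commute)
qed

lemma grad_meas:
  fixes \<phi> :: "'a::euclidean_space \<Rightarrow> real"
  assumes d: "\<forall>x. (\<phi> has_derivative (\<lambda>h. T x \<bullet> h)) (at x)"
  shows "T \<in> borel_measurable borel"
proof -
  have cont: "continuous_on UNIV \<phi>"
    using d has_derivative_continuous continuous_at_imp_continuous_on by blast
  have seq: "filterlim (\<lambda>n. inverse (real (Suc n))) (at 0) sequentially"
    by (rule tendsto_imp_filterlim_at_right[THEN filterlim_mono, OF LIMSEQ_inverse_real_of_nat])
       (auto simp: at_within_le_at)
  show ?thesis
  proof (subst borel_measurable_euclidean_space, intro ballI)
    fix i :: 'a assume i: "i \<in> Basis"
    define f where "f n x = (\<phi> (x + inverse (real (Suc n)) *\<^sub>R i) - \<phi> x) / inverse (real (Suc n))" for n x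
    show "(\<lambda>x. T x \<bullet> i) \<in> borel_measurable borel"
    proof (rule borel_measurable_LIMSEQ_real[where u=f])
      fix n show "f n \<in> borel_measurable borel"
        unfolding f_def
        by (intro borel_measurable_continuous_onI continuous_intros continuous_on_compose2[OF cont]) auto
    next
      fix x :: 'a
      have "((\<lambda>s. \<phi> (x + s *\<^sub>R i)) has_real_derivative T x \<bullet> i) (at 0)"
        using line_deriv[of \<phi> "\<lambda>h. T x \<bullet> h" x 0 i] d by simp
      from has_field_derivative_iff[THEN iffD1, OF this] have "((\<lambda>s. (\<phi> (x + s *\<^sub>R i) - \<phi> x) / s) \<longlongrightarrow> T x \<bullet> i) (at 0)" by simp
      from filterlim_compose[OF this seq]
      show "(\<lambda>n. f n x) \<longlonglongrightarrow> T x \<bullet> i" unfolding f_def by simp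
    qed
  qed
qed

lemma V_upper:
  fixes V :: "'a::real_inner \<Rightarrow> real"
  assumes pos: "\<forall>x. V x > 0" and grad: "\<forall>x. (V has_derivative (\<lambda>h. DV x \<bullet> h)) (at x)"
    and decay: "\<forall>x. norm (DV x) / V x \<le> A / (1 + norm x)"
  shows "V y \<le> V 0 * (1 + norm y) powr A"
proof -
  define h where "h t = ln (V (t *\<^sub>R y)) - A * ln (1 + t * norm y)" for t
  have "h 1 \<le> h 0"
  proof (rule DERIV_nonpos_imp_nonincreasing[of 0 1 h])
    fix t :: real assume t: "0 \<le> t" "t \<le> 1"
    have dV: "((\<lambda>s. V (s *\<^sub>R y)) has_real_derivative DV (t *\<^sub>R y) \<bullet> y) (at t)"
      using line_deriv[of V "\<lambda>h. DV (t *\<^sub>R y) \<bullet> h" 0 t y] grad by simp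
    have pt: "0 < 1 + t * norm y" using t by (simp add: add_pos_nonneg)
    have d1: "((\<lambda>s. ln (V (s *\<^sub>R y))) has_real_derivative inverse (V (t *\<^sub>R y)) * (DV (t *\<^sub>R y) \<bullet> y)) (at t)"
      using DERIV_chain2[OF DERIV_ln[OF pos[rule_format, of "t *\<^sub>R y"]] dV] by simp
    have d2: "((\<lambda>s. ln (1 + s * norm y)) has_real_derivative norm y / (1 + t * norm y)) (at t)"
      using pt by (auto intro!: derivative_eq_intros)
    have "(h has_real_derivative (inverse (V (t *\<^sub>R y)) * (DV (t *\<^sub>R y) \<bullet> y)
             - A * (norm y / (1 + t * norm y)))) (at t)"
      unfolding h_def by (rule DERIV_diff[OF d1 DERIV_cmult[OF d2]])
    moreover have "inverse (V (t *\<^sub>R y)) * (DV (t *\<^sub>R y) \<bullet> y)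
             - A * (norm y / (1 + t * norm y)) \<le> 0"
    proof -
      have "DV (t *\<^sub>R y) \<bullet> y \<le> norm (DV (t *\<^sub>R y)) * norm y" by (rule norm_cauchy_schwarz)
      moreover have "norm (DV (t *\<^sub>R y)) \<le> A / (1 + t * norm y) * V (t *\<^sub>R y)"
        using decay[rule_format, of "t *\<^sub>R y"] pos[rule_format, of "t *\<^sub>R y"] t
        by (simp add: divide_le_eq abs_of_nonneg)
      ultimately have "DV (t *\<^sub>R y) \<bullet> y \<le> A / (1 + t * norm y) * V (t *\<^sub>R y) * norm y"
        by (meson mult_right_mono norm_ge_zero order_trans)
      then have "inverse (V (t *\<^sub>R y)) * (DV (t *\<^sub>R y) \<bullet> y) \<le> A / (1 + t * norm y) * norm y"
        using pos[rule_format, of "t *\<^sub>R y"]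
        by (simp add: field_simps)
      then show ?thesis by (simp add: field_simps)
    qed
    ultimately show "\<exists>y. (h has_real_derivative y) (at t) \<and> y \<le> 0" by blast
  qed simp
  then have "ln (V y) \<le> ln (V 0) + A * ln (1 + norm y)" by (simp add: h_def)
  then have "V y \<le> exp (ln (V 0) + A * ln (1 + norm y))"
    using pos by (metis exp_le_cancel_iff exp_ln)
  also have "\<dots> = V 0 * (1 + norm y) powr A"
    using pos by (simp add: exp_add powr_def add_pos_nonneg mult.commute)
       (metis add_pos_nonneg norm_ge_zero zero_less_one less_irrefl)
  finally show ?thesis .
qed



lemma pd_invertible:
  fixes S :: "real^'n^'n"
  assumes "pos_def_matrix S" shows "invertible S"
proof -
  have "\<forall>x. S *v x = 0 \<longrightarrow> x = 0"
  proof (intro allI impI)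
    fix x assume "S *v x = 0"
    then show "x = 0" using assms unfolding pos_def_matrix_def
      by (metis inner_zero_right less_irrefl)
  qed
  then show ?thesis
    unfolding invertible_left_inverse using matrix_left_invertible_ker by blast
qed

lemma matrix_inv_right:
  fixes S :: "real^'n^'n"
  assumes "invertible S" shows "S ** matrix_inv S = mat 1"
proof -
  have "\<exists>A'. S ** A' = mat 1 \<and> A' ** S = mat 1" using assms by (simp add: invertible_def)
  from someI_ex[OF this] show ?thesis unfolding matrix_inv_def by blast
qed

lemma Q_pos:
  fixes S :: "real^'n^'n"
  assumes S: "pos_def_matrix S" and w: "w \<noteq> 0"
  shows "w \<bullet> (matrix_inv S *v w) > 0"
proof -
  define u where "u = matrix_inv S *v w"
  have Su: "S *v u = w" unfolding u_def
    by (simp add: matrix_vector_mul_assoc matrix_inv_right[OF pd_invertible[OF S]])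
  have "u \<noteq> 0" using Su w by auto
  then have "u \<bullet> (S *v u) > 0" using S unfolding pos_def_matrix_def by blast
  then show ?thesis using Su by (simp add: u_def[symmetric] inner_commute)
qed

lemma Q_cont:
  fixes M :: "real^'n^'n"
  shows "continuous_on UNIV (\<lambda>z. (z - m) \<bullet> (M *v (z - m)))"
  by (intro continuous_intros bounded_linear.continuous_on[OF matrix_vector_mul_bounded_linear])

lemma Q_scale:
  fixes M :: "real^'n^'n"
  shows "(c *\<^sub>R w) \<bullet> (M *v (c *\<^sub>R w)) = c^2 * (w \<bullet> (M *v w))"
  by (simp add: matrix_vector_mult_scaleR power2_eq_square)

lemma Q_lb:
  fixes S :: "real^'n^'n"
  assumes S: "pos_def_matrix S"
  shows "\<exists>l>0. \<forall>w. w \<bullet> (matrix_inv S *v w) \<ge> l * (norm w)^2"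
proof -
  have "\<exists>x\<in>sphere (0::real^'n) 1. \<forall>y\<in>sphere 0 1. x \<bullet> (matrix_inv S *v x) \<le> y \<bullet> (matrix_inv S *v y)"
    using Q_cont[of 0 "matrix_inv S"]
    by (intro continuous_attains_inf) (auto intro: continuous_on_subset)
  then obtain x0 :: "real^'n" where x0: "norm x0 = 1" and mn: "\<forall>y. norm y = 1 \<longrightarrow> x0 \<bullet> (matrix_inv S *v x0) \<le> y \<bullet> (matrix_inv S *v y)"
    by auto
  define l where "l = x0 \<bullet> (matrix_inv S *v x0)"
  have lp: "l > 0" unfolding l_def using Q_pos[OF S, of x0] x0 by (metis norm_zero zero_neq_one)
  show ?thesis
  proof (intro exI[of _ l] conjI allI lp)
    fix w :: "real^'n"
    show "w \<bullet> (matrix_inv S *v w) \<ge> l * (norm w)^2"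
    proof (cases "w = 0")
      case True then show ?thesis by simp
    next
      case False
      define y where "y = (1 / norm w) *\<^sub>R w"
      have ny: "norm y = 1" using False by (simp add: y_def)
      have wy: "w = norm w *\<^sub>R y" using False by (simp add: y_def)
      have "w \<bullet> (matrix_inv S *v w) = (norm w)^2 * (y \<bullet> (matrix_inv S *v y))"
        by (subst wy, subst wy, rule Q_scale)
      moreover have "l \<le> y \<bullet> (matrix_inv S *v y)" using mn ny l_def by auto
      ultimately show ?thesis by (metis mult.commute mult_right_mono zero_le_power2)
    qed
  qed
qed

lemma affine_nn:
  fixes H :: "real^'n \<Rightarrow> ennreal"
  assumes [measurable]: "H \<in> borel_measurable borel" and c: "c \<noteq> 0"
  shows "(\<integral>\<^sup>+x. H x \<partial>lborel) = ennreal (\<bar>c\<bar>^CARD('n)) * (\<integral>\<^sup>+x. H (t + c *\<^sub>R x) \<partial>lborel)"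
  by (subst lborel_affine[OF c, of t])
     (simp add: nn_integral_density nn_integral_distr nn_integral_cmult)



lemma gauss_tail:
  fixes S :: "real^'n^'n"
  assumes S: "pos_def_matrix S"
    and tot: "(\<integral>\<^sup>+x. ennreal (gaussian_density m S x) \<partial>lborel) = 1"
  shows "\<exists>l>0. \<forall>\<rho>\<ge>0. (\<integral>\<^sup>+x. ennreal (gaussian_density m S x) * indicator {x. \<rho> \<le> norm (x - m)} x \<partial>lborel)
            \<le> ennreal ((sqrt 2)^CARD('n) * exp (- l * \<rho>^2 / 4))"
proof -
  obtain l where lp: "l > 0" and lb: "\<forall>w. w \<bullet> (matrix_inv S *v w) \<ge> l * (norm w)^2"
    using Q_lb[OF S] by blast
  define K where "K = sqrt ((2 * pi) ^ CARD('n) * det S)"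
  define Q where "Q z = (z - m) \<bullet> (matrix_inv S *v (z - m))" for z
  have g: "gaussian_density m S z = exp (- Q z / 2) / K" for z
    unfolding gaussian_density_def Q_def K_def by simp
  have Kp: "K > 0"
  proof (rule ccontr)
    assume "\<not> K > 0"
    then have "gaussian_density m S z \<le> 0" for z unfolding g
      by (intro divide_nonneg_nonpos) auto
    then have "(\<lambda>x. ennreal (gaussian_density m S x)) = (\<lambda>x. 0)"
      by (simp add: fun_eq_iff ennreal_neg)
    then have "(\<integral>\<^sup>+x. ennreal (gaussian_density m S x) \<partial>lborel) = 0"
      by simp
    with tot show False by simp
  qed
  have Qc: "continuous_on UNIV Q" unfolding Q_def by (rule Q_cont)
  define H where "H z = ennreal (exp (- Q z / 4) / K)" for z
  have Hm[measurable]: "H \<in> borel_measurable borel"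
    unfolding H_def using Kp
    by (intro measurable_compose[OF _ measurable_ennreal] borel_measurable_continuous_onI
        continuous_intros continuous_on_compose2[OF Qc]) auto
  have tH: "H (m - sqrt 2 *\<^sub>R m + sqrt 2 *\<^sub>R x) = ennreal (gaussian_density m S x)" for x
  proof -
    have e: "m - sqrt 2 *\<^sub>R m + sqrt 2 *\<^sub>R x - m = sqrt 2 *\<^sub>R (x - m)" by (simp add: algebra_simps)
    have "Q (m - sqrt 2 *\<^sub>R m + sqrt 2 *\<^sub>R x) = (sqrt 2 *\<^sub>R (x - m)) \<bullet> (matrix_inv S *v (sqrt 2 *\<^sub>R (x - m)))"
      unfolding Q_def by (simp only: e)
    also have "\<dots> = 2 * Q x" by (subst Q_scale) (simp add: Q_def)
    finally have "Q (m - sqrt 2 *\<^sub>R m + sqrt 2 *\<^sub>R x) = 2 * Q x" .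
    then show ?thesis unfolding H_def g by simp
  qed
  have intH: "(\<integral>\<^sup>+x. H x \<partial>lborel) = ennreal ((sqrt 2)^CARD('n))"
    using affine_nn[OF Hm, of "sqrt 2" "m - sqrt 2 *\<^sub>R m"] by (simp add: tH tot)
  show ?thesis
  proof (intro exI[of _ l] conjI allI impI lp)
    fix \<rho> :: real assume \<rho>: "\<rho> \<ge> 0"
    have pw: "ennreal (gaussian_density m S x) * indicator {x. \<rho> \<le> norm (x - m)} x
              \<le> ennreal (exp (- l * \<rho>^2 / 4)) * H x" for x
    proof (cases "\<rho> \<le> norm (x - m)")
      case True
      have "l * \<rho>^2 \<le> l * (norm (x - m))^2"
        using True \<rho> lp by (intro mult_left_mono power_mono) auto
      also have "\<dots> \<le> Q x" using lb unfolding Q_def by blast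
      finally have lq: "l * \<rho>^2 \<le> Q x" .
      have "gaussian_density m S x = exp (- Q x / 4) * (exp (- Q x / 4) / K)"
        unfolding g by (simp add: exp_add[symmetric])
      also have "\<dots> \<le> exp (- l * \<rho>^2 / 4) * (exp (- Q x / 4) / K)"
        using lq Kp by (intro mult_right_mono) auto
      finally show ?thesis using True Kp unfolding H_def
        by (simp add: ennreal_mult'' [symmetric])
    qed simp
    have "(\<integral>\<^sup>+x. ennreal (gaussian_density m S x) * indicator {x. \<rho> \<le> norm (x - m)} x \<partial>lborel)
          \<le> (\<integral>\<^sup>+x. ennreal (exp (- l * \<rho>^2 / 4)) * H x \<partial>lborel)"
      by (rule nn_integral_mono) (rule pw)
    also have "\<dots> = ennreal (exp (- l * \<rho>^2 / 4)) * ennreal ((sqrt 2)^CARD('n))"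
      by (simp add: nn_integral_cmult intH)
    also have "\<dots> = ennreal ((sqrt 2)^CARD('n) * exp (- l * \<rho>^2 / 4))"
      by (simp add: ennreal_mult'' [symmetric] mult.commute)
    finally show "(\<integral>\<^sup>+x. ennreal (gaussian_density m S x) * indicator {x. \<rho> \<le> norm (x - m)} x \<partial>lborel)
            \<le> ennreal ((sqrt 2)^CARD('n) * exp (- l * \<rho>^2 / 4))" .
  qed
qed



lemma final_real:
  fixes R n :: "'a \<Rightarrow> real" and d :: nat
  assumes V0: "V0 > 0" and vb: "vb > 0" and K1: "K1 > 0" and l: "l > 0" and A: "A > 0" and M: "M \<ge> 0"
    and nn: "\<forall>x. n x \<ge> 0" and Rn: "\<forall>x. R x \<ge> 0"
    and H: "\<forall>x. 3*M \<le> R x \<and> R x > 0 \<longrightarrow> inverse ((V0 * (5/2 + n x) powr A)^d) * vb \<le> K1 * exp (- l * (R x / 3 - M)^2 / 4)"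
  shows "\<exists>C>0. \<forall>x. R x \<le> C * sqrt (1 + ln (1 + n x))"
proof -
  define B0 where "B0 = \<bar>ln K1\<bar> + \<bar>ln vb\<bar> + d * \<bar>ln V0\<bar> + d * A * ln (5/2)"
  define a where "a = 4 / l * (B0 + d * A)"
  have B0: "B0 \<ge> 0" unfolding B0_def using A by (simp add: add_nonneg_nonneg)
  have a0: "a \<ge> 0" unfolding a_def using l A B0 by simp
  define C where "C = 3 * sqrt a + 3 * M + 1"
  have Cp: "C > 0" unfolding C_def using a0 M by (simp add: add_nonneg_pos)
  show ?thesis
  proof (intro exI[of _ C] conjI allI Cp)
    fix x
    define L where "L = ln (1 + n x)"
    have L0: "L \<ge> 0" unfolding L_def using nn by simp
    have s1: "sqrt (1 + L) \<ge> 1" using L0 by simp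
    show "R x \<le> C * sqrt (1 + ln (1 + n x))"
    proof (cases "3*M \<le> R x \<and> R x > 0")
      case False
      then have "R x \<le> 3 * M" using Rn[rule_format, of x] M by auto
      also have "\<dots> \<le> C" unfolding C_def using a0 by simp
      also have "\<dots> \<le> C * sqrt (1 + L)" using Cp s1 by simp
      finally show ?thesis by (simp add: L_def)
    next
      case True
      define \<rho> where "\<rho> = R x / 3 - M"
      have \<rho>0: "\<rho> \<ge> 0" using True unfolding \<rho>_def by simp
      have np: "0 < 5/2 + n x" using nn by (simp add: add_pos_nonneg)
      have hx: "inverse ((V0 * (5/2 + n x) powr A)^d) * vb \<le> K1 * exp (- l * \<rho>^2 / 4)"
        using H True unfolding \<rho>_def by blast
      have lhs_pos: "0 < inverse ((V0 * (5/2 + n x) powr A)^d) * vb" using V0 vb np by simp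
      have "ln (inverse ((V0 * (5/2 + n x) powr A)^d) * vb) \<le> ln (K1 * exp (- l * \<rho>^2 / 4))"
        using hx lhs_pos by (subst ln_le_cancel_iff) auto
      moreover have "ln (inverse ((V0 * (5/2 + n x) powr A)^d) * vb) = ln vb - d * (ln V0 + A * ln (5/2 + n x))"
        using V0 vb np by (simp add: ln_mult ln_inverse ln_realpow ln_powr)
      moreover have "ln (K1 * exp (- l * \<rho>^2 / 4)) = ln K1 - l * \<rho>^2 / 4"
        using K1 by (simp add: ln_mult)
      ultimately have e1: "l * \<rho>^2 / 4 \<le> ln K1 - ln vb + d * ln V0 + d * A * ln (5/2 + n x)"
        by (simp add: algebra_simps)
      have "ln (5/2 + n x) \<le> ln (5/2 * (1 + n x))"
        using np nn[rule_format, of x] by (subst ln_le_cancel_iff) auto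
      also have "\<dots> = ln (5/2) + L" unfolding L_def using nn[rule_format, of x] by (subst ln_mult) (auto simp: add_pos_nonneg)
      finally have e2: "ln (5/2 + n x) \<le> ln (5/2) + L" .
      have "d * A * ln (5/2 + n x) \<le> d * A * (ln (5/2) + L)"
        using e2 A by (intro mult_left_mono) auto
      then have e4: "d * A * ln (5/2 + n x) \<le> d * A * ln (5/2) + d * A * L"
        by (simp add: distrib_left)
      have ab1: "ln K1 \<le> \<bar>ln K1\<bar>" "- ln vb \<le> \<bar>ln vb\<bar>" by auto
      have ab2: "d * ln V0 \<le> d * \<bar>ln V0\<bar>" by (intro mult_left_mono) auto
      have "l * \<rho>^2 / 4 \<le> B0 + d * A * L"
        unfolding B0_def using e1 e4 ab1 ab2 by linarith
      also have "\<dots> \<le> (B0 + d * A) * (1 + L)"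
        using B0 L0 A by (simp add: algebra_simps mult_nonneg_nonneg)
      finally have "\<rho>^2 \<le> a * (1 + L)" unfolding a_def using l by (simp add: field_simps)
      then have "\<rho> \<le> sqrt (a * (1 + L))" using \<rho>0 by (simp add: real_le_rsqrt)
      also have "\<dots> = sqrt a * sqrt (1 + L)" by (simp add: real_sqrt_mult)
      finally have e3: "\<rho> \<le> sqrt a * sqrt (1 + L)" .
      have "R x = 3 * \<rho> + 3 * M" unfolding \<rho>_def by simp
      also have "\<dots> \<le> 3 * (sqrt a * sqrt (1 + L)) + 3 * M * sqrt (1 + L)"
        using e3 M s1 by (intro add_mono) (auto simp: mult_le_cancel_left1)
      also have "\<dots> \<le> C * sqrt (1 + L)" unfolding C_def using s1 by (simp add: algebra_simps)
      finally show ?thesis by (simp add: L_def)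
    qed
  qed
qed


theorem theorem2p2:
  fixes V :: "real^'n \<Rightarrow> real"
    and DV :: "real^'n \<Rightarrow> real^'n"
    and m :: "real^'n" and S :: "real^'n^'n"
    and T :: "real^'n \<Rightarrow> real^'n"
    and A :: real
  assumes S: "pos_def_matrix S"
    and V_pos: "\<forall>x. V x > 0"
    and V_lb: "\<exists>c>0. \<forall>x. V x \<ge> c"
    and V_grad: "\<forall>x. (V has_derivative (\<lambda>h. DV x \<bullet> h)) (at x)"
    and V_C11loc: "\<forall>x. \<exists>r>0. \<exists>L. \<forall>y\<in>ball x r. \<forall>z\<in>ball x r.
                      norm (DV y - DV z) \<le> L * dist y z"
    and V_int: "(\<integral>\<^sup>+ x. ennreal (inverse (V x ^ CARD('n))) \<partial>lborel) = 1"
    and A_pos: "A > 0"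
    and V_decay: "\<forall>x. norm (DV x) / V x \<le> A / (1 + norm x)"
    and T: "monotone_transport (density lborel (\<lambda>x. ennreal (inverse (V x ^ CARD('n)))))
                               (density lborel (\<lambda>x. ennreal (gaussian_density m S x))) T"
  shows "\<exists>C>0. \<forall>x. norm (T x) \<le> C * sqrt (1 + ln (1 + norm x))"
proof -
  define f where "f = (\<lambda>x. ennreal (inverse (V x ^ CARD('n))))"
  define G where "G = (\<lambda>x. ennreal (gaussian_density m S x))"
  define \<mu> where "\<mu> = density lborel f"
  define \<nu> where "\<nu> = density lborel G"
  obtain \<phi> where cvx: "convex_on UNIV \<phi>" and d\<phi>: "\<forall>x. (\<phi> has_derivative (\<lambda>h. T x \<bullet> h)) (at x)"
    and dist: "distr \<mu> lborel T = \<nu>"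
    using T unfolding monotone_transport_def \<mu>_def \<nu>_def f_def G_def by blast
  have Tm: "T \<in> borel_measurable borel" by (rule grad_meas[OF d\<phi>])
  have TmM: "T \<in> measurable \<mu> lborel"
    using Tm unfolding \<mu>_def by (subst measurable_cong_sets[of _ borel _ borel]) auto
  have Vc: "continuous_on UNIV V"
    using V_grad has_derivative_continuous continuous_at_imp_continuous_on by blast
  have Vm[measurable]: "V \<in> borel_measurable borel" by (rule borel_measurable_continuous_onI[OF Vc])
  have fm[measurable]: "f \<in> borel_measurable borel" unfolding f_def by measurable
  have gc: "continuous_on UNIV (\<lambda>x. exp (- ((x - m) \<bullet> (matrix_inv S *v (x - m))) / 2))"
    by (intro continuous_intros bounded_linear.continuous_on[OF matrix_vector_mul_bounded_linear]) auto
  have gm0[measurable]: "(\<lambda>x. exp (- ((x - m) \<bullet> (matrix_inv S *v (x - m))) / 2)) \<in> borel_measurable borel"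
    by (rule borel_measurable_continuous_onI[OF gc])
  have Gm[measurable]: "G \<in> borel_measurable borel" unfolding G_def gaussian_density_def by measurable
  have emu: "emeasure \<mu> B = (\<integral>\<^sup>+x. f x * indicator B x \<partial>lborel)" if "B \<in> sets borel" for B
    unfolding \<mu>_def using that by (subst emeasure_density) auto
  have enu: "emeasure \<nu> B = (\<integral>\<^sup>+x. G x * indicator B x \<partial>lborel)" if "B \<in> sets borel" for B
    unfolding \<nu>_def using that by (subst emeasure_density) auto
  have push: "emeasure \<nu> B = emeasure \<mu> (T -` B)" if "B \<in> sets borel" for B
  proof -
    have "emeasure \<nu> B = emeasure (distr \<mu> lborel T) B" using dist by simp
    also have "\<dots> = emeasure \<mu> (T -` B \<inter> space \<mu>)" using that by (intro emeasure_distr[OF TmM]) auto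
    also have "\<dots> = emeasure \<mu> (T -` B)" by (simp add: \<mu>_def)
    finally show ?thesis .
  qed
  have "emeasure \<nu> UNIV = emeasure \<mu> UNIV" using push[of UNIV] by simp
  also have "\<dots> = 1" using emu[of UNIV] V_int by (simp add: f_def)
  finally have "(\<integral>\<^sup>+x. G x \<partial>lborel) = 1" using enu[of UNIV] by simp
  then have tot: "(\<integral>\<^sup>+x. ennreal (gaussian_density m S x) \<partial>lborel) = 1" by (simp add: G_def)
  obtain l where lp: "l > 0" and tail: "\<forall>\<rho>\<ge>0. (\<integral>\<^sup>+x. ennreal (gaussian_density m S x) * indicator {x. \<rho> \<le> norm (x - m)} x \<partial>lborel)
            \<le> ennreal ((sqrt 2)^CARD('n) * exp (- l * \<rho>^2 / 4))"
    using gauss_tail[OF S tot] by blast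
  define vb where "vb = unit_ball_vol (real CARD('n)) * (1/2) ^ CARD('n)"
  have vbp: "vb > 0" unfolding vb_def by simp
  have key: "inverse ((V 0 * (5/2 + norm x) powr A)^CARD('n)) * vb
             \<le> (sqrt 2)^CARD('n) * exp (- l * (norm (T x) / 3 - norm m)^2 / 4)"
    if x: "3 * norm m \<le> norm (T x) \<and> norm (T x) > 0" for x
  proof -
    define R where "R = norm (T x)"
    have Rp: "R > 0" using x by (simp add: R_def)
    define e where "e = (1 / R) *\<^sub>R T x"
    have ne: "norm e = 1" using Rp by (simp add: e_def R_def)
    have Te: "T x \<bullet> e = R" using Rp by (simp add: e_def R_def dot_square_norm power2_eq_square)
    define B where "B = ball (x + e) (1/2)"
    define cx where "cx = inverse ((V 0 * (5/2 + norm x) powr A)^CARD('n))"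
    define \<rho> where "\<rho> = R / 3 - norm m"
    have \<rho>0: "\<rho> \<ge> 0" using x by (simp add: \<rho>_def R_def)
    have sub: "B \<subseteq> T -` {z. \<rho> \<le> norm (z - m)}"
    proof
      fix y assume yB: "y \<in> B"
      define u where "u = y - x"
      define w where "w = u - e"
      have nw: "norm w < 1/2" using yB by (simp add: B_def w_def u_def dist_norm norm_minus_commute algebra_simps)
      have mono: "(T y - T x) \<bullet> u \<ge> 0" unfolding u_def by (rule grad_mono[OF cvx d\<phi>])
      have "\<bar>T x \<bullet> w\<bar> \<le> R * norm w" unfolding R_def by (rule Cauchy_Schwarz_ineq2)
      then have "T x \<bullet> u \<ge> R - R * norm w" using Te by (simp add: w_def inner_diff_right)
      moreover have "R * norm w \<le> R / 2" using nw Rp by simp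
      ultimately have "T x \<bullet> u \<ge> R / 2" by simp
      then have "T y \<bullet> u \<ge> R / 2" using mono by (simp add: inner_diff_left)
      moreover have "T y \<bullet> u \<le> norm (T y) * norm u" by (rule norm_cauchy_schwarz)
      moreover have "norm u \<le> 3/2"
      proof -
        have "norm u \<le> norm e + norm w" unfolding w_def by (metis add_diff_cancel_left' diff_add_cancel norm_triangle_ineq)
        then show ?thesis using ne nw by simp
      qed
      ultimately have "R / 2 \<le> norm (T y) * (3/2)"
        by (smt (verit) mult_left_mono norm_ge_zero)
      then have "R / 3 \<le> norm (T y)" by simp
      moreover have "norm (T y) \<le> norm (T y - m) + norm m" using norm_triangle_ineq[of "T y - m" m] by simp
      ultimately show "y \<in> T -` {z. \<rho> \<le> norm (z - m)}" by (simp add: \<rho>_def)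
    qed
    have Bs[measurable]: "B \<in> sets borel" unfolding B_def by simp
    have Cs: "{z. \<rho> \<le> norm (z - m)} \<in> sets borel" by measurable
    have lower: "ennreal cx * ennreal vb \<le> emeasure \<mu> B"
    proof -
      have pw: "ennreal cx * indicator B y \<le> f y * indicator B y" for y
      proof (cases "y \<in> B")
        case True
        have "norm (y - x) \<le> norm e + norm (y - (x + e))" by (metis add_diff_cancel_left' diff_add_cancel diff_diff_add norm_triangle_ineq)
        then have "norm (y - x) \<le> 3/2" using True ne by (simp add: B_def dist_norm norm_minus_commute)
        then have ny: "norm y \<le> norm x + 3/2" by (metis add.commute add_le_cancel_left diff_add_cancel norm_triangle_ineq order_trans)
        have "V y \<le> V 0 * (1 + norm y) powr A" by (rule V_upper[OF V_pos V_grad V_decay])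
        also have "\<dots> \<le> V 0 * (5/2 + norm x) powr A"
          using ny A_pos V_pos[rule_format, of 0] by (intro mult_left_mono powr_mono2) auto
        finally have "V y ^ CARD('n) \<le> (V 0 * (5/2 + norm x) powr A) ^ CARD('n)"
          using V_pos[rule_format, of y] by (intro power_mono) auto
        then have "cx \<le> inverse (V y ^ CARD('n))"
          unfolding cx_def using V_pos[rule_format, of y] by (intro le_imp_inverse_le) auto
        then show ?thesis using True by (simp add: f_def ennreal_leI)
      qed simp
      have "ennreal cx * ennreal vb = ennreal cx * emeasure lborel B"
        by (simp add: B_def emeasure_ball vb_def)
      also have "\<dots> = (\<integral>\<^sup>+y. ennreal cx * indicator B y \<partial>lborel)"
        by (simp add: nn_integral_cmult_indicator)
      also have "\<dots> \<le> (\<integral>\<^sup>+y. f y * indicator B y \<partial>lborel)" by (rule nn_integral_mono) (rule pw)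
      also have "\<dots> = emeasure \<mu> B" using emu[OF Bs] by simp
      finally show ?thesis .
    qed
    have "emeasure \<mu> B \<le> emeasure \<mu> (T -` {z. \<rho> \<le> norm (z - m)})"
    proof (rule emeasure_mono[OF sub])
      show "T -` {z. \<rho> \<le> norm (z - m)} \<in> sets \<mu>"
        using measurable_sets[OF TmM, of "{z. \<rho> \<le> norm (z - m)}"] Cs by (simp add: \<mu>_def)
    qed
    also have "\<dots> = emeasure \<nu> {z. \<rho> \<le> norm (z - m)}" using push[OF Cs] by simp
    also have "\<dots> = (\<integral>\<^sup>+x. ennreal (gaussian_density m S x) * indicator {x. \<rho> \<le> norm (x - m)} x \<partial>lborel)"
      using enu[OF Cs] by (simp add: G_def)
    also have "\<dots> \<le> ennreal ((sqrt 2)^CARD('n) * exp (- l * \<rho>^2 / 4))" using tail \<rho>0 by blast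
    finally have "ennreal (cx * vb) \<le> ennreal ((sqrt 2)^CARD('n) * exp (- l * \<rho>^2 / 4))"
      using lower vbp by (simp add: ennreal_mult'' cx_def)
    then have "cx * vb \<le> (sqrt 2)^CARD('n) * exp (- l * \<rho>^2 / 4)"
      by (subst (asm) ennreal_le_iff) auto
    then show ?thesis by (simp add: cx_def \<rho>_def R_def)
  qed
  show ?thesis
    by (rule final_real[of "V 0" vb "(sqrt 2)^CARD('n)" l A "norm m" "\<lambda>x. norm x" "\<lambda>x. norm (T x)" "CARD('n)"])
       (use V_pos vbp lp A_pos key in auto)
qed

end
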